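(* Let $H$ be a hypergraph with $R(H)=\{1,2\}$ such that the graph $H^2$ of its $2$-edges is bipartite and $H$ contains no closed path $\bar P_{2k}$ as a subgraph for any $k\ge1$. Then $\pi(H)=1$.
   Context: A hypergraph $H=(V,E)$ has finite vertex set $V$ and edge set $E\subseteq 2^V$; $R(H)=\{|F|:F\in E\}$. $H_1\subseteq H_2$ (subgraph) means there is an injective $f\colon V(H_1)\to V(H_2)$ with $f(F)\in E(H_2)$ for all $F\in E(H_1)$. For $G$ on $n$ vertices, $h_n(G)=\sum_{F\in E(G)}1/\binom{n}{|F|}$; $\pi_n(H)=\max\{h_n(G): G\text{ on } n \text{ vertices}, R(G)\subseteq R(H), H\not\subseteq G\}$ and $\pi(H)=\lim_n\pi_n(H)$. A closed path of length $m$, $\bar P_m$, is the hypergraph with vertices $x_1,\dots,x_m$, $1$-edges $\{x_1\},\{x_m\}$ and $2$-edges $\{x_i,x_{i+1}\}$ for $1\le i\le m-1$. *)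

theory Defs
  imports Complex_Main
begin

type_synonym 'a hgraph = "'a set \<times> 'a set set"

definition hypergraph :: "'a hgraph \<Rightarrow> bool" where
  "hypergraph H \<longleftrightarrow> finite (fst H) \<and> snd H \<subseteq> Pow (fst H)"

definition edge_sizes :: "'a hgraph \<Rightarrow> nat set" where
  "edge_sizes H = card ` snd H"

definition subgraph :: "'a hgraph \<Rightarrow> 'b hgraph \<Rightarrow> bool" where
  "subgraph H1 H2 \<longleftrightarrow> (\<exists>f. f ` fst H1 \<subseteq> fst H2 \<and> inj_on f (fst H1)
      \<and> (\<forall>F\<in>snd H1. f ` F \<in> snd H2))"

definition h_n :: "nat \<Rightarrow> 'a hgraph \<Rightarrow> real" where
  "h_n n G = (\<Sum>F\<in>snd G. 1 / real (n choose card F))"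

definition pi_n :: "'a hgraph \<Rightarrow> nat \<Rightarrow> real" where
  "pi_n H n = Max {h_n n G | G :: nat hgraph. fst G = {0..<n} \<and> snd G \<subseteq> Pow {0..<n}
       \<and> edge_sizes G \<subseteq> edge_sizes H \<and> \<not> subgraph H G}"

definition two_graph_bipartite :: "'a hgraph \<Rightarrow> bool" where
  "two_graph_bipartite H \<longleftrightarrow> (\<exists>A. A \<subseteq> fst H \<and>
      (\<forall>F\<in>snd H. card F = 2 \<longrightarrow> card (F \<inter> A) = 1))"

definition closed_path :: "nat \<Rightarrow> nat hgraph" where
  "closed_path m = ({1..m}, {{1}, {m}} \<union> {{i, i+1} | i. 1 \<le> i \<and> i \<le> m - 1})"

end

theory Submission
  imports Defs
begin

lemma kst_count:
  fixes S :: "nat set" and E :: "nat set set"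
  assumes S: "S \<subseteq> {0..<n}" and E2: "\<forall>F\<in>E. card F = 2"
    and B: "B \<subseteq> {0..<n}" and Bm: "\<forall>y\<in>B. m \<le> card {x\<in>S. {x,y}\<in>E}"
    and ineq: "(t-1) * (n choose t) < card B * (m choose t)"
  shows "\<exists>X Y. X \<subseteq> S \<and> Y \<subseteq> {0..<n} \<and> card X = t \<and> card Y = t \<and> X \<inter> Y = {}
           \<and> (\<forall>x\<in>X. \<forall>y\<in>Y. {x,y}\<in>E)"
proof (rule ccontr)
  assume nt: "\<not> ?thesis"
  define N where "N y = {x\<in>S. {x,y}\<in>E}" for y
  define P where "P = Sigma B (\<lambda>y. {T. T \<subseteq> N y \<and> card T = t})"
  define Ts where "Ts = {T. T \<subseteq> S \<and> card T = t}"
  define C where "C T = {y\<in>{0..<n}. T \<subseteq> N y}" for T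
  have finS: "finite S" using S finite_subset by blast
  have finN: "finite (N y)" for y using finS unfolding N_def by auto
  have finB: "finite B" using B finite_subset by blast
  have finTs: "finite Ts" unfolding Ts_def using finS by (auto intro: finite_subset[of _ "Pow S"])
  have finC: "finite (C T)" for T unfolding C_def by auto
  have Csmall: "card (C T) \<le> t - 1" if "T \<in> Ts" for T
  proof (rule ccontr)
    assume "\<not> card (C T) \<le> t - 1"
    then have "t \<le> card (C T)" by simp
    then obtain Y where Y: "Y \<subseteq> C T" "card Y = t" by (meson obtain_subset_with_card_n)
    have "T \<subseteq> S" "card T = t" using that unfolding Ts_def by auto
    moreover have "Y \<subseteq> {0..<n}" using Y unfolding C_def by auto
    moreover have cpl: "\<forall>x\<in>T. \<forall>y\<in>Y. {x,y}\<in>E" using Y unfolding C_def N_def by auto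
    moreover have "T \<inter> Y = {}"
    proof (rule ccontr)
      assume "T \<inter> Y \<noteq> {}"
      then obtain x where "x \<in> T" "x \<in> Y" by auto
      with cpl have "{x,x} \<in> E" by blast
      with E2 show False by auto
    qed
    ultimately show False using nt Y by blast
  qed
  have "card P = (\<Sum>y\<in>B. card (N y) choose t)"
    unfolding P_def using finB finN by (simp add: n_subsets)
  also have "\<dots> \<ge> card B * (m choose t)"
    using sum_bounded_below[of B "m choose t" "\<lambda>y. card (N y) choose t"] Bm binomial_right_mono
    unfolding N_def by (simp add: binomial_right_mono)
  finally have P1: "card B * (m choose t) \<le> card P" .
  have "card P \<le> card (Sigma Ts C)"
  proof (rule card_inj_on_le[where f="\<lambda>(y,T). (T,y)"])
    show "inj_on (\<lambda>(y,T). (T,y)) P" by (auto simp: inj_on_def)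
    show "(\<lambda>(y,T). (T,y)) ` P \<subseteq> Sigma Ts C"
      using B unfolding P_def Ts_def C_def N_def by auto
    show "finite (Sigma Ts C)" using finTs finC by auto
  qed
  also have "\<dots> = (\<Sum>T\<in>Ts. card (C T))" using finTs finC by simp
  also have "\<dots> \<le> card Ts * (t - 1)" using sum_bounded_above[of Ts "\<lambda>T. card (C T)" "t-1"] Csmall by simp
  also have "card Ts = card S choose t" unfolding Ts_def using finS by (simp add: n_subsets)
  also have "\<dots> \<le> n choose t" using S binomial_right_mono
    by (metis card_atLeastLessThan card_mono finite_atLeastLessThan diff_zero)
  finally have "card P \<le> (n choose t) * (t - 1)" by simp
  with P1 ineq show False by (simp add: mult.commute)
qed


lemma succ_pre: "successively P (xs@ys) \<Longrightarrow> successively P xs" by (simp add: successively_append_iff)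
lemma succ_suf: "successively P (xs@ys) \<Longrightarrow> successively P ys" by (simp add: successively_append_iff)
lemma succ_mid: "successively P (xs@ys@zs) \<Longrightarrow> successively P ys" by (simp add: successively_append_iff)

lemma walk_parity:
  assumes adjA: "\<And>x y. adj x y \<Longrightarrow> (x \<in> A) \<noteq> (y \<in> A)"
  shows "p \<noteq> [] \<Longrightarrow> successively adj p \<Longrightarrow> ((hd p \<in> A) = (last p \<in> A)) = odd (length p)"
proof (induction p)
  case Nil then show ?case by simp
next
  case (Cons x p)
  show ?case
  proof (cases "p = []")
    case True then show ?thesis by simp
  next
    case False
    with Cons.prems have "adj x (hd p)" "successively adj p" by (auto simp: successively_Cons)
    with Cons.IH False adjA[of x "hd p"] show ?thesis by auto
  qed
qed

lemma coloring:
  fixes H :: "'a hgraph"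
  assumes hyp: "hypergraph H" and sizes: "edge_sizes H = {1,2}"
    and bip: "two_graph_bipartite H"
    and noP: "\<forall>k::nat. k \<ge> 1 \<longrightarrow> \<not> subgraph (closed_path (2 * k)) H"
  shows "\<exists>c. (\<forall>x. {x} \<in> snd H \<longrightarrow> c x) \<and> (\<forall>x y. {x,y} \<in> snd H \<longrightarrow> x \<noteq> y \<longrightarrow> c x \<noteq> c y)"
proof -
  obtain A where A: "\<forall>F\<in>snd H. card F = 2 \<longrightarrow> card (F \<inter> A) = 1"
    using bip unfolding two_graph_bipartite_def by blast
  define adj where "adj x y \<longleftrightarrow> {x,y} \<in> snd H \<and> x \<noteq> y" for x y
  have adj_sym: "adj x y = adj y x" for x y unfolding adj_def by (auto simp: insert_commute)
  have adj_sym': "(\<lambda>x y. adj y x) = adj" using adj_sym by (intro ext) auto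
  have adjA: "(x \<in> A) \<noteq> (y \<in> A)" if "adj x y" for x y
  proof -
    have "card ({x,y} \<inter> A) = 1" using A that unfolding adj_def by auto
    then show ?thesis using that unfolding adj_def
      by (cases "x \<in> A"; cases "y \<in> A") auto
  qed
  have VE: "F \<in> snd H \<Longrightarrow> F \<subseteq> fst H" for F using hyp unfolding hypergraph_def by auto
  define walk where "walk p \<longleftrightarrow> p \<noteq> [] \<and> successively adj p" for p
  have par: "walk p \<Longrightarrow> ((hd p \<in> A) = (last p \<in> A)) = odd (length p)" for p
    using walk_parity[of adj A p] adjA unfolding walk_def by blast
  define bad where "bad p \<longleftrightarrow> walk p \<and> {hd p} \<in> snd H \<and> {last p} \<in> snd H \<and> even (length p)" for p
  have nobad: "\<not> bad p" for p
  proof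
    assume "bad p"
    then obtain q where q: "bad q" and qmin: "\<forall>r. bad r \<longrightarrow> length q \<le> length r"
      using ex_has_least_nat[of bad p length] by blast
    have dq: "distinct q"
    proof (rule ccontr)
      assume "\<not> distinct q"
      then obtain xs ys zs v where qd: "q = xs@[v]@ys@[v]@zs" using not_distinct_decomp by blast
      define q' where "q' = xs@[v]@zs"
      have sq: "successively adj q" using q unfolding bad_def walk_def by auto
      have w1: "successively adj (xs@[v])" "successively adj (v#ys@[v])" "successively adj (v#zs)"
      proof -
        have e1: "q = (xs@[v])@(ys@[v]@zs)" "q = xs@(v#ys@[v])@zs" "q = (xs@[v]@ys)@(v#zs)" using qd by auto
        show "successively adj (xs@[v])" using sq e1(1) succ_pre by metis
        show "successively adj (v#ys@[v])" using sq e1(2) succ_mid by metis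
        show "successively adj (v#zs)" using sq e1(3) succ_suf by metis
      qed
      have wq': "walk q'" unfolding walk_def q'_def using w1 
        by (auto simp: successively_append_iff successively_Cons)
      have "odd (length (v#ys@[v]))" using par[of "v#ys@[v]"] w1 unfolding walk_def by simp
      then have ev: "odd (length ys)" by simp
      have "hd q' = hd q" unfolding q'_def qd by (cases xs) auto
      moreover have "last q' = last q" unfolding q'_def qd by (cases zs) auto
      moreover have "even (length q')" using q ev unfolding bad_def qd q'_def by auto
      ultimately have "bad q'" using q wq' unfolding bad_def by auto
      moreover have "length q' < length q" unfolding q'_def qd by simp
      ultimately show False using qmin by fastforce
    qed
    have qne: "q \<noteq> []" and sq: "successively adj q" and ev: "even (length q)"
      and h1: "{hd q} \<in> snd H" and l1: "{last q} \<in> snd H"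
      using q unfolding bad_def walk_def by auto
    obtain k where k: "length q = 2 * k" using ev by blast
    have k1: "k \<ge> 1" using qne k by (cases k) auto
    define f where "f i = q ! (i - 1)" for i
    have adjn: "adj (q ! i) (q ! Suc i)" if "Suc i < length q" for i
      using successively_nth[OF sq that] .
    have inV: "q ! i \<in> fst H" if "i < length q" for i
    proof (cases "Suc i < length q")
      case True then show ?thesis using adjn[OF True] VE unfolding adj_def by auto
    next
      case False
      then obtain j where j: "i = Suc j" using that k k1 by (cases i) auto
      then show ?thesis using adjn[of j] VE that unfolding adj_def by auto
    qed
    have "subgraph (closed_path (2 * k)) H"
      unfolding subgraph_def closed_path_def fst_conv snd_conv
    proof (intro exI conjI ballI)
      show "f ` {1..2 * k} \<subseteq> fst H" using inV k unfolding f_def by auto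
      show "inj_on f {1..2*k}" unfolding f_def inj_on_def using dq k
        by (auto simp: nth_eq_iff_index_eq)
    next
      fix F assume "F \<in> {{1}, {2 * k}} \<union> {{i, i + 1} |i. 1 \<le> i \<and> i \<le> 2 * k - 1}"
      then consider "F = {1}" | "F = {2*k}" | i where "F = {i, i+1}" "1 \<le> i" "i \<le> 2*k - 1" by blast
      then show "f ` F \<in> snd H"
      proof cases
        case 1 then show ?thesis using h1 qne unfolding f_def by (simp add: hd_conv_nth)
      next
        case 2 then show ?thesis using l1 qne k unfolding f_def by (simp add: last_conv_nth)
      next
        case 3
        then obtain j where j: "i = Suc j" by (cases i) auto
        have "adj (q ! j) (q ! Suc j)" using adjn[of j] 3 j k k1 by auto
        then show ?thesis using 3 j unfolding f_def adj_def by simp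
      qed
    qed
    then show False using noP k1 by blast
  qed
  define R where "R v \<longleftrightarrow> (\<exists>p. walk p \<and> {hd p} \<in> snd H \<and> last p = v)" for v
  define Od where "Od v \<longleftrightarrow> (\<exists>p. walk p \<and> {hd p} \<in> snd H \<and> last p = v \<and> odd (length p))" for v
  define c where "c v \<longleftrightarrow> Od v \<or> (\<not> R v \<and> v \<in> A)" for v
  have snoc: "walk (p@[y])" if "walk p" "adj (last p) y" for p y
    using that unfolding walk_def by (auto simp: successively_append_iff)
  have join: "walk (p @ rev q)" if "walk p" "walk q" "adj (last p) (last q)" for p q
  proof -
    have "successively adj (rev q)" using that(2) unfolding walk_def
      by (subst successively_rev) (subst adj_sym', simp)
    then show ?thesis using that unfolding walk_def by (auto simp: successively_append_iff hd_rev)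
  qed
  have "\<forall>x. {x} \<in> snd H \<longrightarrow> c x"
  proof (intro allI impI)
    fix x assume "{x} \<in> snd H"
    then have "walk [x] \<and> {hd [x]} \<in> snd H \<and> last [x] = x \<and> odd (length [x])"
      unfolding walk_def by simp
    then show "c x" unfolding c_def Od_def by blast
  qed
  moreover have "c x \<noteq> c y" if "adj x y" for x y
  proof (cases "Od x")
    case True
    then obtain p where p: "walk p" "{hd p} \<in> snd H" "last p = x" "odd (length p)" unfolding Od_def by blast
    have wp: "walk (p@[y])" using snoc p that by auto
    have "hd (p@[y]) = hd p" using p unfolding walk_def by simp
    then have Ry: "R y" unfolding R_def using wp p by (metis last_snoc)
    have "\<not> Od y"
    proof
      assume "Od y"
      then obtain q where q: "walk q" "{hd q} \<in> snd H" "last q = y" "odd (length q)" unfolding Od_def by blast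
      have w: "walk (p @ rev q)" using join[of p q] p q that by auto
      have "bad (p @ rev q)" unfolding bad_def using w p q unfolding walk_def
        by (auto simp: last_rev)
      then show False using nobad by blast
    qed
    then show ?thesis using True Ry unfolding c_def by auto
  next
    case False
    show ?thesis
    proof (cases "R x")
      case True
      then obtain p where p: "walk p" "{hd p} \<in> snd H" "last p = x" unfolding R_def by blast
      have ev: "even (length p)" using False p unfolding Od_def by blast
      have wp: "walk (p@[y])" using snoc p that by auto
      have "hd (p@[y]) = hd p" using p unfolding walk_def by simp
      then have "walk (p@[y]) \<and> {hd (p@[y])} \<in> snd H \<and> last (p@[y]) = y \<and> odd (length (p@[y]))"
        using wp p ev by simp
      then have "Od y" unfolding Od_def by blast
      then show ?thesis using False True unfolding c_def by auto
    next
      case nR: False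
      have "\<not> R y"
      proof
        assume "R y"
        then obtain p where p: "walk p" "{hd p} \<in> snd H" "last p = y" unfolding R_def by blast
        have wp: "walk (p@[x])" using snoc p that adj_sym by auto
        have "hd (p@[x]) = hd p" using p unfolding walk_def by simp
        then have "R x" unfolding R_def using wp p by (metis last_snoc)
        then show False using nR by simp
      qed
      moreover have "\<not> Od y" using \<open>\<not> R y\<close> unfolding Od_def R_def by blast
      ultimately show ?thesis using nR False adjA[OF that] unfolding c_def by auto
    qed
  qed
  ultimately show ?thesis unfolding adj_def by blast
qed

lemma real_choose2: "real (m choose 2) = real m * (real m - 1) / 2"
proof (induction m)
  case 0 then show ?case by simp
next
  case (Suc m)
  have "Suc m choose 2 = m + (m choose 2)" using binomial_Suc_Suc[of m 1] by (simp add: numeral_2_eq_2)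
  then show ?case using Suc by (simp add: field_simps)
qed

lemma real_ineq_core:
  fixes N s e eT :: real
  assumes N2: "N \<ge> 2" and s0: "0 \<le> s" and sN: "s \<le> N" and eps: "\<epsilon> > 0"
    and h: "s / N + e / (N * (N - 1) / 2) > 1 + \<epsilon>"
    and e: "e \<le> eT + (N - s) * (N - s - 1) / 2"
  shows "eT > \<epsilon> * N * (N - 1) / 2"
proof -
  have D: "N * (N - 1) / 2 > 0" using N2 by simp
  have "e / (N * (N - 1) / 2) > 1 + \<epsilon> - s / N" using h by simp
  then have "e > (1 + \<epsilon> - s / N) * (N * (N - 1) / 2)" using pos_less_divide_eq[OF D] by blast
  also have "(1 + \<epsilon> - s / N) * (N * (N - 1) / 2) = (N + \<epsilon> * N - s) * (N - 1) / 2"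
    using N2 by (simp add: field_simps)
  finally have e1: "e > (N + \<epsilon> * N - s) * (N - 1) / 2" .
  have "(N + \<epsilon> * N - s) * (N - 1) - (N - s) * (N - s - 1) = \<epsilon> * N * (N - 1) + (N - s) * s"
    by (simp add: algebra_simps)
  moreover have "(N - s) * s \<ge> 0" using s0 sN by simp
  ultimately show ?thesis using e1 e by linarith
qed

lemma dense_Ktt:
  fixes \<epsilon> :: real and t :: nat
  assumes eps: "\<epsilon> > 0" and t1: "t \<ge> 1"
  shows "\<exists>N0. \<forall>n\<ge>N0. \<forall>G :: nat hgraph. fst G = {0..<n} \<longrightarrow> snd G \<subseteq> Pow {0..<n}
     \<longrightarrow> edge_sizes G \<subseteq> {1,2} \<longrightarrow> h_n n G > 1 + \<epsilon> \<longrightarrow>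
     (\<exists>X Y. X \<subseteq> {x. {x} \<in> snd G} \<and> Y \<subseteq> {0..<n} \<and> card X = t \<and> card Y = t \<and> X \<inter> Y = {}
        \<and> (\<forall>x\<in>X. \<forall>y\<in>Y. {x,y} \<in> snd G))"
proof -
  define \<delta> where "\<delta> = \<epsilon> / 8"
  have d0: "\<delta> > 0" using eps unfolding \<delta>_def by simp
  define c0 where "c0 = \<delta> * (\<delta> / real t) ^ t"
  have c0: "c0 > 0" using d0 t1 unfolding c0_def by simp
  define N0 where "N0 = nat \<lceil>(real t - 1) / c0 + real t / \<delta>\<rceil> + 2"
  show ?thesis
  proof (rule exI[of _ N0], intro allI impI)
    fix n :: nat and G :: "nat hgraph"
    assume nN0: "n \<ge> N0" and V: "fst G = {0..<n}" and EP: "snd G \<subseteq> Pow {0..<n}"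
      and sz: "edge_sizes G \<subseteq> {1,2}" and hG: "h_n n G > 1 + \<epsilon>"
    define N where "N = real n"
    have t0: "real t - 1 \<ge> 0" using t1 by simp
    have q1: "(real t - 1) / c0 \<ge> 0" using t0 c0 by simp
    have q2: "real t / \<delta> \<ge> 0" using d0 by simp
    have "real N0 \<ge> (real t - 1) / c0 + real t / \<delta> + 2" unfolding N0_def
      using q1 q2 by linarith
    then have Nbig: "N \<ge> (real t - 1) / c0 + real t / \<delta> + 2" using nN0 unfolding N_def by linarith
    have N2: "N \<ge> 2" using Nbig q1 q2 by linarith
    have Nc0: "c0 * N > real t - 1"
    proof -
      have "N > (real t - 1) / c0" using Nbig q2 by linarith
      then show ?thesis using c0 by (simp add: field_simps)
    qed
    have Nt: "\<delta> * N \<ge> real t"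
    proof -
      have "N \<ge> real t / \<delta>" using Nbig q1 by linarith
      then show ?thesis using d0 by (simp add: field_simps)
    qed
    define S where "S = {x. {x} \<in> snd G}"
    define E where "E = {F\<in>snd G. card F = 2}"
    define E1 where "E1 = {F\<in>snd G. card F = 1}"
    have SV: "S \<subseteq> {0..<n}" using EP unfolding S_def by auto
    have finS: "finite S" using SV finite_subset by blast
    have finG: "finite (snd G)" using EP finite_subset by (metis finite_Pow_iff finite_atLeastLessThan)
    have E2: "\<forall>F\<in>E. card F = 2" unfolding E_def by auto
    have Sn: "card S \<le> n" using card_mono[OF _ SV] by simp
    have sizes: "card F = 1 \<or> card F = 2" if "F \<in> snd G" for F
      using sz that unfolding edge_sizes_def by auto
    have split: "snd G = E1 \<union> E" unfolding E1_def E_def using sizes by auto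
    have disj: "E1 \<inter> E = {}" unfolding E1_def E_def by auto
    have E1S: "E1 = (\<lambda>x. {x}) ` S" unfolding E1_def S_def by (auto simp: card_1_singleton_iff)
    have cE1: "card E1 = card S" unfolding E1S by (simp add: card_image)
    have finE: "finite E" "finite E1" using finG unfolding E_def E1_def by auto
    have "h_n n G = (\<Sum>F\<in>E1. 1 / real (n choose card F)) + (\<Sum>F\<in>E. 1 / real (n choose card F))"
      unfolding h_n_def split using finE disj by (simp add: sum.union_disjoint)
    also have "(\<Sum>F\<in>E1. 1 / real (n choose card F)) = real (card S) / N"
      using cE1 unfolding E1_def N_def by simp
    also have "(\<Sum>F\<in>E. 1 / real (n choose card F)) = real (card E) / (N * (N - 1) / 2)"
      unfolding E_def N_def by (simp add: real_choose2)
    finally have hS: "real (card S) / N + real (card E) / (N * (N - 1) / 2) > 1 + \<epsilon>" using hG by simp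
    define eT where "eT = {F\<in>E. F \<inter> S \<noteq> {}}"
    define Rest where "Rest = {F. F \<subseteq> {0..<n} - S \<and> card F = 2}"
    have "E \<subseteq> eT \<union> Rest" unfolding eT_def Rest_def E_def using EP by auto
    then have "card E \<le> card (eT \<union> Rest)" by (rule card_mono[rotated]) (auto simp: Rest_def eT_def finE)
    also have "\<dots> \<le> card eT + card Rest" by (rule card_Un_le)
    also have "card Rest = (n - card S) choose 2"
      unfolding Rest_def using SV finS by (simp add: n_subsets card_Diff_subset)
    finally have cE: "real (card E) \<le> real (card eT) + real ((n - card S) choose 2)" by linarith
    have "real ((n - card S) choose 2) = (N - real (card S)) * (N - real (card S) - 1) / 2"
      unfolding real_choose2 N_def using Sn by (simp add: of_nat_diff)
    with cE have cE': "real (card E) \<le> real (card eT) + (N - real (card S)) * (N - real (card S) - 1) / 2"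
      by simp
    have eTbig: "real (card eT) > \<epsilon> * N * (N - 1) / 2"
      using real_ineq_core[OF N2 _ _ eps hS cE'] Sn unfolding N_def by simp
    define d where "d y = card {x\<in>S. {x,y}\<in>E}" for y
    define Pairs where "Pairs = Sigma {0..<n} (\<lambda>y. {x\<in>S. {x,y}\<in>E})"
    have finP: "finite Pairs" unfolding Pairs_def using finS by auto
    have "eT \<subseteq> (\<lambda>(y,x). {x,y}) ` Pairs"
    proof
      fix F assume F: "F \<in> eT"
      then obtain a where a: "a \<in> F" "a \<in> S" unfolding eT_def by auto
      have "card F = 2" "F \<in> snd G" using F unfolding eT_def E_def by auto
      then obtain u v where uv: "F = {u,v}" "u \<noteq> v" by (meson card_2_iff)
      obtain b where b: "F = {a,b}" using a(1) uv by auto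
      have "b \<in> {0..<n}" using b \<open>F \<in> snd G\<close> EP by auto
      moreover have "{a,b} \<in> E" using F b unfolding eT_def by auto
      ultimately have "(b,a) \<in> Pairs" unfolding Pairs_def using a by auto
      then show "F \<in> (\<lambda>(y,x). {x,y}) ` Pairs" using b by force
    qed
    then have "card eT \<le> card Pairs" using card_image_le[OF finP] card_mono
      by (metis (no_types, lifting) finP finite_imageI le_trans)
    also have "card Pairs = (\<Sum>y\<in>{0..<n}. d y)" unfolding Pairs_def d_def using finS by simp
    finally have sumd: "real (\<Sum>y\<in>{0..<n}. d y) > \<epsilon> * N * (N - 1) / 2" using eTbig by linarith
    have q4: "\<epsilon> * N * (N - 1) / 2 \<ge> \<epsilon> * N * N / 4"
    proof -
      have "N - 1 \<ge> N / 2" using N2 by simp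
      then have "\<epsilon> * N * (N - 1) \<ge> \<epsilon> * N * (N / 2)" using eps N2 by (intro mult_left_mono) auto
      moreover have "\<epsilon> * N * (N / 2) / 2 = \<epsilon> * N * N / 4" by simp
      ultimately show ?thesis by linarith
    qed
    have "(\<Sum>y\<in>{0..<n}. real (d y)) = real (\<Sum>y\<in>{0..<n}. d y)" by simp
    with sumd q4 have sumd2: "(\<Sum>y\<in>{0..<n}. real (d y)) > \<epsilon> * N * N / 4" by linarith
    define B where "B = {y\<in>{0..<n}. real (d y) \<ge> \<delta> * N}"
    have dle: "real (d y) \<le> N" for y
    proof -
      have "d y \<le> card S" unfolding d_def using finS by (intro card_mono) auto
      then show ?thesis using Sn unfolding N_def by linarith
    qed
    have BV: "B \<subseteq> {0..<n}" unfolding B_def by auto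
    have sp: "(\<Sum>y\<in>{0..<n}. real (d y)) = (\<Sum>y\<in>{0..<n} - B. real (d y)) + (\<Sum>y\<in>B. real (d y))"
      by (rule sum.subset_diff[OF BV]) auto
    have b1: "(\<Sum>y\<in>B. real (d y)) \<le> real (card B) * N"
      using sum_bounded_above[of B "\<lambda>y. real (d y)" N] dle by simp
    have b2: "(\<Sum>y\<in>{0..<n} - B. real (d y)) \<le> real (card ({0..<n} - B)) * (\<delta> * N)"
      using sum_bounded_above[of "{0..<n} - B" "\<lambda>y. real (d y)" "\<delta> * N"] unfolding B_def by force
    have b3: "real (card ({0..<n} - B)) * (\<delta> * N) \<le> N * (\<delta> * N)"
    proof -
      have "card ({0..<n} - B) \<le> n" using card_mono[of "{0..<n}" "{0..<n} - B"] by auto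
      then show ?thesis using d0 N2 unfolding N_def by (intro mult_right_mono) auto
    qed
    have "real (card B) * N + N * (\<delta> * N) > \<epsilon> * N * N / 4" using sumd2 sp b1 b2 b3 by linarith
    then have "real (card B) * N > \<delta> * N * N" unfolding \<delta>_def by (simp add: algebra_simps)
    then have "\<delta> * N * N < real (card B) * N" by simp
    then have "\<delta> * N < real (card B)" using mult_right_less_imp_less[of "\<delta> * N" N "real (card B)"] N2 by auto
    then have cB: "real (card B) \<ge> \<delta> * N" by simp
    define m where "m = nat \<lceil>\<delta> * N\<rceil>"
    have mge: "real m \<ge> \<delta> * N" unfolding m_def by linarith
    have Bm: "\<forall>y\<in>B. m \<le> d y"
    proof
      fix y assume "y \<in> B"
      then have "real (d y) \<ge> \<delta> * N" unfolding B_def by auto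
      then show "m \<le> d y" unfolding m_def by (simp add: nat_le_iff ceiling_le_iff)
    qed
    have tm: "t \<le> m" using mge Nt by linarith
    have "real ((t - 1) * (n choose t)) \<le> (real t - 1) * N ^ t"
    proof -
      have "real (n choose t) \<le> N ^ t"
      proof (cases "t \<le> n")
        case True
        then have "n choose t \<le> n ^ t" by (rule binomial_le_pow)
        then show ?thesis unfolding N_def by (metis of_nat_le_iff of_nat_power)
      next
        case False then show ?thesis unfolding N_def by (simp add: binomial_eq_0)
      qed
      then show ?thesis using t1 t0 by (simp add: of_nat_diff mult_left_mono)
    qed
    also have "(real t - 1) * N ^ t < c0 * N * N ^ t"
      using Nc0 N2 by (intro mult_strict_right_mono) auto
    also have "c0 * N * N ^ t = \<delta> * N * (\<delta> * N / real t) ^ t"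
      unfolding c0_def by (simp add: power_mult_distrib field_simps)
    also have "\<dots> \<le> real (card B) * (real m / real t) ^ t"
      using cB mge d0 N2 t1 by (intro mult_mono power_mono divide_right_mono) auto
    also have "real (card B) * (real m / real t) ^ t \<le> real (card B) * real (m choose t)"
      using binomial_ge_n_over_k_pow_k[OF tm] by (intro mult_left_mono) auto
    finally have "real ((t - 1) * (n choose t)) < real (card B * (m choose t))" by simp
    then have ineq: "(t - 1) * (n choose t) < card B * (m choose t)" by linarith
    have Bm': "\<forall>y\<in>B. m \<le> card {x\<in>S. {x,y}\<in>E}" using Bm unfolding d_def .
    obtain X Y where XY: "X \<subseteq> S" "Y \<subseteq> {0..<n}" "card X = t" "card Y = t" "X \<inter> Y = {}"
      "\<forall>x\<in>X. \<forall>y\<in>Y. {x,y}\<in>E"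
      using kst_count[OF SV E2 BV Bm' ineq] by blast
    show "\<exists>X Y. X \<subseteq> {x. {x} \<in> snd G} \<and> Y \<subseteq> {0..<n} \<and> card X = t \<and> card Y = t \<and> X \<inter> Y = {}
        \<and> (\<forall>x\<in>X. \<forall>y\<in>Y. {x,y} \<in> snd G)"
      by (intro exI[of _ X] exI[of _ Y]) (use XY in \<open>auto simp: S_def E_def\<close>)
  qed
qed

lemma embed:
  fixes H :: "'a hgraph" and G :: "nat hgraph"
  assumes hyp: "hypergraph H" and sizes: "edge_sizes H = {1,2}" and t1: "card (fst H) \<ge> 1"
    and c1: "\<forall>x. {x} \<in> snd H \<longrightarrow> c x" and c2: "\<forall>x y. {x,y} \<in> snd H \<longrightarrow> x \<noteq> y \<longrightarrow> c x \<noteq> c y"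
    and XS: "X \<subseteq> {x. {x} \<in> snd G}" and YV: "Y \<subseteq> fst G" and XV: "X \<subseteq> fst G"
    and cX: "card X = card (fst H)" and cY: "card Y = card (fst H)" and XY: "X \<inter> Y = {}"
    and cpl: "\<forall>x\<in>X. \<forall>y\<in>Y. {x,y} \<in> snd G"
  shows "subgraph H G"
proof -
  define V where "V = fst H"
  have finV: "finite V" using hyp unfolding hypergraph_def V_def by auto
  have "card X > 0" "card Y > 0" using cX cY t1 by auto
  then have finX: "finite X" and finY: "finite Y" using card_ge_0_finite by auto
  define T where "T = {v\<in>V. c v}"
  define F where "F = {v\<in>V. \<not> c v}"
  have "card T \<le> card X" unfolding cX T_def V_def using finV by (intro card_mono) (auto simp: V_def)
  then obtain gT where gT: "gT ` T \<subseteq> X" "inj_on gT T"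
    using card_le_inj[of T X] finX finV unfolding T_def by auto
  have "card F \<le> card Y" unfolding cY F_def V_def using finV by (intro card_mono) (auto simp: V_def)
  then obtain gF where gF: "gF ` F \<subseteq> Y" "inj_on gF F"
    using card_le_inj[of F Y] finY finV unfolding F_def by auto
  define f where "f v = (if c v then gT v else gF v)" for v
  have fX: "c v \<Longrightarrow> v \<in> V \<Longrightarrow> f v \<in> X" for v using gT unfolding f_def T_def by auto
  have fY: "\<not> c v \<Longrightarrow> v \<in> V \<Longrightarrow> f v \<in> Y" for v using gF unfolding f_def F_def by auto
  have EV: "E \<in> snd H \<Longrightarrow> E \<subseteq> V" for E using hyp unfolding hypergraph_def V_def by auto
  show ?thesis unfolding subgraph_def
  proof (intro exI[of _ f] conjI ballI)
    show "f ` fst H \<subseteq> fst G" using fX fY XV YV unfolding V_def by blast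
    show "inj_on f (fst H)"
    proof (rule inj_onI)
      fix u v assume uv: "u \<in> fst H" "v \<in> fst H" "f u = f v"
      show "u = v"
      proof (cases "c u"; cases "c v")
        assume "c u" "c v" then show ?thesis using uv gT(2) unfolding f_def T_def V_def inj_on_def by auto
      next
        assume "\<not> c u" "\<not> c v" then show ?thesis using uv gF(2) unfolding f_def F_def V_def inj_on_def by auto
      next
        assume "c u" "\<not> c v" then show ?thesis using uv fX[of u] fY[of v] XY unfolding V_def by auto
      next
        assume "\<not> c u" "c v" then show ?thesis using uv fX[of v] fY[of u] XY unfolding V_def by auto
      qed
    qed
  next
    fix E assume E: "E \<in> snd H"
    have "card E \<in> {1,2}" using sizes E unfolding edge_sizes_def by auto
    then consider "card E = 1" | "card E = 2" by auto
    then show "f ` E \<in> snd G"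
    proof cases
      case 1
      then obtain x where x: "E = {x}" by (auto simp: card_1_singleton_iff)
      then have "c x" "x \<in> V" using c1 E EV by auto
      then have "f x \<in> X" using fX by auto
      then show ?thesis using XS x by auto
    next
      case 2
      then obtain x y where xy: "E = {x,y}" "x \<noteq> y" by (meson card_2_iff)
      then have V: "x \<in> V" "y \<in> V" using E EV by auto
      have cxy: "c x \<noteq> c y" using c2 E xy by auto
      show ?thesis
      proof (cases "c x")
        case True
        then have "f x \<in> X" "f y \<in> Y" using fX fY V cxy by auto
        then show ?thesis using cpl xy by auto
      next
        case False
        then have "f y \<in> X" "f x \<in> Y" using fX fY V cxy by auto
        then have "{f y, f x} \<in> snd G" using cpl by auto
        then show ?thesis using xy by (auto simp: insert_commute)
      qed
    qed
  qed
qed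

theorem mainTheorem10:
  fixes H :: "'a hgraph"
  assumes "hypergraph H"
    and "edge_sizes H = {1, 2}"
    and "two_graph_bipartite H"
    and "\<forall>k::nat. k \<ge> 1 \<longrightarrow> \<not> subgraph (closed_path (2 * k)) H"
  shows "(\<lambda>n. pi_n H n) \<longlonglongrightarrow> 1"
proof -
  note hyp = assms(1) and sizes = assms(2)
  obtain c where c1: "\<forall>x. {x} \<in> snd H \<longrightarrow> c x" and c2: "\<forall>x y. {x,y} \<in> snd H \<longrightarrow> x \<noteq> y \<longrightarrow> c x \<noteq> c y"
    using coloring[OF assms] by blast
  have "2 \<in> card ` snd H" using sizes unfolding edge_sizes_def by simp
  then obtain F2 where F2: "F2 \<in> snd H" "card F2 = 2" by (metis imageE)
  have finV: "finite (fst H)" using hyp unfolding hypergraph_def by auto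
  have F2V: "F2 \<subseteq> fst H" using hyp F2 unfolding hypergraph_def by auto
  have t1: "card (fst H) \<ge> 1" using card_mono[OF finV F2V] F2 by simp
  define Gs where "Gs n = {h_n n G | G :: nat hgraph. fst G = {0..<n} \<and> snd G \<subseteq> Pow {0..<n}
       \<and> edge_sizes G \<subseteq> edge_sizes H \<and> \<not> subgraph H G}" for n
  have piGs: "pi_n H n = Max (Gs n)" for n unfolding pi_n_def Gs_def by simp
  have finGs: "finite (Gs n)" for n
  proof -
    have "Gs n \<subseteq> (\<lambda>E. h_n n ({0..<n}, E)) ` Pow (Pow {0..<n})"
    proof
      fix h assume "h \<in> Gs n"
      then obtain G :: "nat hgraph" where G: "h = h_n n G" "fst G = {0..<n}" "snd G \<subseteq> Pow {0..<n}"
        unfolding Gs_def by blast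
      have "G = ({0..<n}, snd G)" using G(2) by (metis prod.collapse)
      then have hG: "h = h_n n ({0..<n}, snd G)" using G(1) by metis
      show "h \<in> (\<lambda>E. h_n n ({0..<n}, E)) ` Pow (Pow {0..<n})"
        by (rule image_eqI[where f="\<lambda>E. h_n n ({0..<n}, E)" and x="snd G"]) (use hG G(3) in auto)
    qed
    then show ?thesis by (rule finite_subset) auto
  qed
  have oneGs: "1 \<in> Gs n" if n1: "n \<ge> 1" for n
  proof -
    define G1 :: "nat hgraph" where "G1 = ({0..<n}, (\<lambda>x. {x}) ` {0..<n})"
    have "h_n n G1 = (\<Sum>x\<in>{0..<n}. 1 / real (n choose card {x}))"
      unfolding h_n_def G1_def by (simp add: sum.reindex)
    also have "\<dots> = 1" using n1 by simp
    finally have h1: "h_n n G1 = 1" .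
    have es: "edge_sizes G1 \<subseteq> edge_sizes H" using sizes n1 unfolding edge_sizes_def G1_def by auto
    have ns: "\<not> subgraph H G1"
    proof
      assume "subgraph H G1"
      then obtain f where f: "inj_on f (fst H)" "\<forall>F\<in>snd H. f ` F \<in> snd G1" unfolding subgraph_def by blast
      have "card (f ` F2) = 2" using card_image[OF inj_on_subset[OF f(1) F2V]] F2 by simp
      moreover have "f ` F2 \<in> (\<lambda>x. {x}) ` {0..<n}" using f(2) F2 unfolding G1_def by auto
      ultimately show False by auto
    qed
    show "1 \<in> Gs n" unfolding Gs_def using h1 es ns
      by (intro CollectI exI[of _ G1]) (auto simp: G1_def)
  qed
  have low: "pi_n H n \<ge> 1" if n1: "n \<ge> 1" for n
    unfolding piGs using Max_ge[OF finGs oneGs[OF n1]] .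
  have up: "\<exists>N0. \<forall>n\<ge>N0. pi_n H n \<le> 1 + \<epsilon>" if eps: "\<epsilon> > 0" for \<epsilon>
  proof -
    obtain N0 where N0: "\<forall>n\<ge>N0. \<forall>G :: nat hgraph. fst G = {0..<n} \<longrightarrow> snd G \<subseteq> Pow {0..<n}
     \<longrightarrow> edge_sizes G \<subseteq> {1,2} \<longrightarrow> h_n n G > 1 + \<epsilon> \<longrightarrow>
     (\<exists>X Y. X \<subseteq> {x. {x} \<in> snd G} \<and> Y \<subseteq> {0..<n} \<and> card X = card (fst H) \<and> card Y = card (fst H) \<and> X \<inter> Y = {}
        \<and> (\<forall>x\<in>X. \<forall>y\<in>Y. {x,y} \<in> snd G))"
      using dense_Ktt[OF eps t1] by blast
    show ?thesis
    proof (rule exI[of _ "max N0 1"], intro allI impI)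
      fix n assume n: "max N0 1 \<le> n"
      have ne: "Gs n \<noteq> {}" using oneGs[of n] n by auto
      have "\<forall>h\<in>Gs n. h \<le> 1 + \<epsilon>"
      proof
        fix h assume "h \<in> Gs n"
        then obtain G :: "nat hgraph" where G: "h = h_n n G" "fst G = {0..<n}" "snd G \<subseteq> Pow {0..<n}"
          "edge_sizes G \<subseteq> edge_sizes H" "\<not> subgraph H G"
          unfolding Gs_def by blast
        show "h \<le> 1 + \<epsilon>"
        proof (rule ccontr)
          assume "\<not> h \<le> 1 + \<epsilon>"
          then have "h_n n G > 1 + \<epsilon>" using G by simp
          then have hgt: "h_n n G > 1 + \<epsilon>" .
          have esG: "edge_sizes G \<subseteq> {1,2}" using G(4) sizes by simp
          have nN: "n \<ge> N0" using n by simp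
          obtain X Y where XY: "X \<subseteq> {x. {x} \<in> snd G}" "Y \<subseteq> {0..<n}" "card X = card (fst H)"
            "card Y = card (fst H)" "X \<inter> Y = {}" "\<forall>x\<in>X. \<forall>y\<in>Y. {x,y} \<in> snd G"
            using N0[rule_format, OF nN G(2) G(3) esG hgt] by blast
          have "X \<subseteq> fst G" using XY(1) G(2,3) by auto
          then have "subgraph H G"
            using embed[OF hyp sizes t1 c1 c2 XY(1) _ _ XY(3,4,5,6)] XY(2) G(2) by auto
          then show False using G by blast
        qed
      qed
      then show "pi_n H n \<le> 1 + \<epsilon>" unfolding piGs using finGs ne by (simp add: Max.boundedI)
    qed
  qed
  show ?thesis
  proof (rule LIMSEQ_I)
    fix r :: real assume r: "r > 0"
    obtain N0 where N0: "\<forall>n\<ge>N0. pi_n H n \<le> 1 + r / 2" using up[of "r/2"] r by auto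
    show "\<exists>no. \<forall>n\<ge>no. norm (pi_n H n - 1) < r"
    proof (rule exI[of _ "max N0 1"], intro allI impI)
      fix n assume "max N0 1 \<le> n"
      then have "pi_n H n \<le> 1 + r / 2" "pi_n H n \<ge> 1" using N0 low by auto
      then show "norm (pi_n H n - 1) < r" using r by simp
    qed
  qed
qed

end
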